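(* Let $F$ be a CNF formula over variables $x_1,\dots,x_n$ with clauses $C_1,\dots,C_m$ of two or three literals each. Let $R$ be the triple set and $H=(V,A)$ the hypergraph constructed from $F$ as described in the context. If $P\subseteq A$ is an acyclic path in $H$ from $\alpha\beta$ to $c_{m+1}\gamma$, then $\mathrm{triples}(P)$ entails $\alpha\beta|\gamma$; that is, every rooted binary tree displaying all triples of $\mathrm{triples}(P)$ also displays $\alpha\beta|\gamma$.
   Context: **Triples and trees.** A rooted triple $pq|o$, with $p,q,o$ distinct leaves and unordered in $p,q$, is displayed by a rooted binary tree $T$ (leaf set containing $p,q,o$) if the path from $p$ to $q$ is node-disjoint from the path from $o$ to the root. **Triples and arcs.** The triple $pq|o$ corresponds to the hyperarc $\mathrm{arc}(pq|o)=\{p,q\}\to\{\{p,o\},\{q,o\}\}$, and $\mathrm{triples}(P)$ is the set of triples corresponding to the arcs of $P$. We write $pq$ for the node $\{p,q\}$. **Hypergraph notions.** A hyperarc $u\to\{v,v'\}$ has tail $u$ and heads $\{v,v'\}$. A path from $u_0$ to $u_\ell$ is a sequence of distinct arcs $(a_1,\dots,a_\ell)$ with $\mathrm{t}(a_1)=u_0$, $u_\ell\in\mathrm{h}(a_\ell)$, and $\mathrm{t}(a_{k+1})\in\mathrm{h}(a_k)$ for all $k$. It is acyclic if no $a_k$ has a head equal to $\mathrm{t}(a_{k'})$ with $k'<k$. **Construction.** Use leaves - $x_i^j,\bar x_i^j,y_i^j,\bar y_i^j$ for $i\in[n]$, $j\in[m]$; - $b_i,b'_i$ for $i\in[n+1]$;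 - $c_j,d_j$ for $j\in[m]$; - $c_{m+1}$, and $\alpha,\beta,\gamma$. The triple set $R$ is the union of the following groups. (i) For each $i\in[n]$: - $b_ib'_i|x_i^1$ and $b'_ix_i^1|y_i^1$; - $x_i^jy_i^j|x_i^{j+1}$ and $y_i^jx_i^{j+1}|y_i^{j+1}$ for $1\le j\le m-1$; - $x_i^my_i^m|b_{i+1}$ and $y_i^mb_{i+1}|b'_{i+1}$. (ii) For each $i\in[n]$: - $b_ib'_i|\bar x_i^1$ and $b'_i\bar x_i^1|\bar y_i^1$; - $\bar x_i^j\bar y_i^j|\bar x_i^{j+1}$ and $\bar y_i^j\bar x_i^{j+1}|\bar y_i^{j+1}$ for $1\le j\le m-1$; - $\bar x_i^m\bar y_i^m|b_{i+1}$ and $\bar x_i^mb_{i+1}|b'_{i+1}$. (iii) For each clause $C_j$: - for each positive occurrence of $x_i$ in $C_j$, the triples $c_jd_j|x_i^j$, $c_jx_i^j|y_i^j$, $c_jy_i^j|c_{j+1}$; - for each negative occurrence of $x_i$ in $C_j$, the same triples with $\bar x_i^j,\bar y_i^j$ in place of $x_i^j,y_i^j$; - if $j<m$, the triple $c_jc_{j+1}|d_{j+1}$. (iv) Connecting triples: $\alpha\beta|b_1$, $\beta b_1|b'_1$, $b_{n+1}b'_{n+1}|c_1$, $b'_{n+1}c_1|d_1$, $c_mc_{m+1}|\gamma$. Then $A=\{\mathrm{arc}(t):t\in R\}$, and $V$ is the set of leaf pairs occurring in arcs of $A$. *)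

theory Defs
  imports Main "HOL-Library.Sublist"
begin

datatype leaf =
    X nat nat
  | XB nat nat
  | Y nat nat
  | YB nat nat
  | B nat
  | B' nat
  | Cc nat
  | D nat
  | Alpha | Beta | Gamma

text \<open>A triple pq|o is represented as (p,q,r).\<close>
type_synonym 'a triple = "'a \<times> 'a \<times> 'a"
type_synonym 'a hyperarc = "'a set \<times> 'a set set"

definition arc :: "'a triple \<Rightarrow> 'a hyperarc" where
  "arc t = (case t of (p,q,r) \<Rightarrow> ({p,q}, {{p,r},{q,r}}))"

definition tail :: "'a hyperarc \<Rightarrow> 'a set" where "tail a = fst a"
definition heads :: "'a hyperarc \<Rightarrow> 'a set set" where "heads a = snd a"

definition triples :: "'a hyperarc set \<Rightarrow> 'a triple set" where
  "triples P = {(p,q,r). p \<noteq> q \<and> p \<noteq> r \<and> q \<noteq> r \<and> arc (p,q,r) \<in> P}"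

definition is_hpath :: "'a hyperarc list \<Rightarrow> 'a set \<Rightarrow> 'a set \<Rightarrow> bool" where
  "is_hpath as u v \<longleftrightarrow> as \<noteq> [] \<and> distinct as \<and> tail (hd as) = u \<and> v \<in> heads (last as)
     \<and> (\<forall>k. Suc k < length as \<longrightarrow> tail (as ! Suc k) \<in> heads (as ! k))"

definition acyclic_hpath :: "'a hyperarc list \<Rightarrow> bool" where
  "acyclic_hpath as \<longleftrightarrow> (\<forall>k k'. k < length as \<and> k' < k \<longrightarrow> tail (as ! k') \<notin> heads (as ! k))"

datatype 'a tree = Leaf 'a | Node "'a tree" "'a tree"

fun leaves :: "'a tree \<Rightarrow> 'a list" where
  "leaves (Leaf a) = [a]"
| "leaves (Node l r) = leaves l @ leaves r"

text \<open>Leaf labels together with their positions (paths from the root, False = left).\<close>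
fun leafpos :: "'a tree \<Rightarrow> ('a \<times> bool list) set" where
  "leafpos (Leaf a) = {(a, [])}"
| "leafpos (Node l r) = (\<lambda>(a,p). (a, False # p)) ` leafpos l \<union> (\<lambda>(a,p). (a, True # p)) ` leafpos r"

definition phylo_tree :: "'a tree \<Rightarrow> bool" where
  "phylo_tree T \<longleftrightarrow> distinct (leaves T)"

text \<open>Nodes (positions) on the tree path between positions u and v:
  ancestors of u or v that are descendants of their lowest common ancestor.\<close>
definition tpath :: "bool list \<Rightarrow> bool list \<Rightarrow> bool list set" where
  "tpath u v = {w. (prefix w u \<or> prefix w v) \<and> (\<forall>z. prefix z u \<and> prefix z v \<longrightarrow> prefix z w)}"

definition rootpath :: "bool list \<Rightarrow> bool list set" where
  "rootpath u = {w. prefix w u}"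

definition displays :: "'a tree \<Rightarrow> 'a triple \<Rightarrow> bool" where
  "displays T t = (case t of (p,q,r) \<Rightarrow>
     (\<exists>up uq ur. (p,up) \<in> leafpos T \<and> (q,uq) \<in> leafpos T \<and> (r,ur) \<in> leafpos T
        \<and> tpath up uq \<inter> rootpath ur = {}))"

definition entails :: "'a triple set \<Rightarrow> 'a triple \<Rightarrow> bool" where
  "entails S t \<longleftrightarrow> (\<forall>T. phylo_tree T \<longrightarrow> (\<forall>s\<in>S. displays T s) \<longrightarrow> displays T t)"

text \<open>A clause is a set of literals (i, True) = x_i, (i, False) = not x_i.\<close>

definition R_var :: "nat \<Rightarrow> nat \<Rightarrow> leaf triple set" where
  "R_var n m = (\<Union>i\<in>{1..n}.
      {(B i, B' i, X i 1), (B' i, X i 1, Y i 1)}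
    \<union> (\<Union>j\<in>{1..m-1}. {(X i j, Y i j, X i (j+1)), (Y i j, X i (j+1), Y i (j+1))})
    \<union> {(X i m, Y i m, B (i+1)), (Y i m, B (i+1), B' (i+1))})"

definition R_negvar :: "nat \<Rightarrow> nat \<Rightarrow> leaf triple set" where
  "R_negvar n m = (\<Union>i\<in>{1..n}.
      {(B i, B' i, XB i 1), (B' i, XB i 1, YB i 1)}
    \<union> (\<Union>j\<in>{1..m-1}. {(XB i j, YB i j, XB i (j+1)), (YB i j, XB i (j+1), YB i (j+1))})
    \<union> {(XB i m, YB i m, B (i+1)), (XB i m, B (i+1), B' (i+1))})"

definition R_clause :: "nat \<Rightarrow> (nat \<Rightarrow> (nat \<times> bool) set) \<Rightarrow> leaf triple set" where
  "R_clause m Cl = (\<Union>j\<in>{1..m}.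
      (\<Union>i\<in>{i. (i, True) \<in> Cl j}.
         {(Cc j, D j, X i j), (Cc j, X i j, Y i j), (Cc j, Y i j, Cc (j+1))})
    \<union> (\<Union>i\<in>{i. (i, False) \<in> Cl j}.
         {(Cc j, D j, XB i j), (Cc j, XB i j, YB i j), (Cc j, YB i j, Cc (j+1))})
    \<union> (if j < m then {(Cc j, Cc (j+1), D (j+1))} else {}))"

definition R_conn :: "nat \<Rightarrow> nat \<Rightarrow> leaf triple set" where
  "R_conn n m = {(Alpha, Beta, B 1), (Beta, B 1, B' 1), (B (n+1), B' (n+1), Cc 1),
                 (B' (n+1), Cc 1, D 1), (Cc m, Cc (m+1), Gamma)}"

definition R_constr :: "nat \<Rightarrow> nat \<Rightarrow> (nat \<Rightarrow> (nat \<times> bool) set) \<Rightarrow> leaf triple set" where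
  "R_constr n m Cl = R_var n m \<union> R_negvar n m \<union> R_clause m Cl \<union> R_conn n m"

definition A_constr :: "nat \<Rightarrow> nat \<Rightarrow> (nat \<Rightarrow> (nat \<times> bool) set) \<Rightarrow> leaf hyperarc set" where
  "A_constr n m Cl = arc ` R_constr n m Cl"

end

theory Submission
  imports Defs
begin

lemma leafpos_in: "(x,p) \<in> leafpos T \<Longrightarrow> x \<in> set (leaves T)"
  by (induction T arbitrary: p) auto

lemma leafpos_Node: "(x,p) \<in> leafpos (Node l r) \<longleftrightarrow>
   (\<exists>p0. p = False # p0 \<and> (x,p0) \<in> leafpos l) \<or> (\<exists>p0. p = True # p0 \<and> (x,p0) \<in> leafpos r)"
  by auto

lemma leafpos_unique: "distinct (leaves T) \<Longrightarrow> (x,p) \<in> leafpos T \<Longrightarrow> (x,p') \<in> leafpos T \<Longrightarrow> p = p'"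
proof (induction T arbitrary: p p')
  case (Leaf a) then show ?case by auto
next
  case (Node l r)
  have d: "distinct (leaves l)" "distinct (leaves r)" "set (leaves l) \<inter> set (leaves r) = {}"
    using Node.prems(1) by auto
  show ?case
    using Node.prems(2,3) unfolding leafpos_Node
  proof (elim disjE exE conjE)
    fix p0 p1 assume "p = False # p0" "(x,p0) \<in> leafpos l" "p' = False # p1" "(x,p1) \<in> leafpos l"
    then have "p0 = p1" using Node.IH(1)[OF d(1)] by simp
    then show ?thesis using \<open>p = False # p0\<close> \<open>p' = False # p1\<close> by simp
  next
    fix p0 p1 assume "p = True # p0" "(x,p0) \<in> leafpos r" "p' = True # p1" "(x,p1) \<in> leafpos r"
    then have "p0 = p1" using Node.IH(2)[OF d(2)] by simp
    then show ?thesis using \<open>p = True # p0\<close> \<open>p' = True # p1\<close> by simp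
  next
    fix p0 p1 assume "(x,p0) \<in> leafpos l" "(x,p1) \<in> leafpos r"
    then show ?thesis using d(3) leafpos_in by (metis disjoint_iff)
  next
    fix p0 p1 assume "(x,p0) \<in> leafpos r" "(x,p1) \<in> leafpos l"
    then show ?thesis using d(3) leafpos_in by (metis disjoint_iff)
  qed
qed

lemma displays_iff:
  "(tpath up uq \<inter> rootpath ur = {}) \<longleftrightarrow> (\<exists>w. prefix w up \<and> prefix w uq \<and> \<not> prefix w ur)"
proof
  assume h: "tpath up uq \<inter> rootpath ur = {}"
  let ?w = "longest_common_prefix up uq"
  have "?w \<in> tpath up uq"
    unfolding tpath_def using longest_common_prefix_prefix1 longest_common_prefix_max_prefix by blast
  then have "\<not> prefix ?w ur" using h unfolding rootpath_def by blast
  then show "\<exists>w. prefix w up \<and> prefix w uq \<and> \<not> prefix w ur"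
    using longest_common_prefix_prefix1 longest_common_prefix_prefix2 by blast
next
  assume "\<exists>w. prefix w up \<and> prefix w uq \<and> \<not> prefix w ur"
  then obtain w where w: "prefix w up" "prefix w uq" "\<not> prefix w ur" by blast
  show "tpath up uq \<inter> rootpath ur = {}"
  proof (rule ccontr)
    assume "tpath up uq \<inter> rootpath ur \<noteq> {}"
    then obtain v where v: "v \<in> tpath up uq" "prefix v ur" unfolding rootpath_def by blast
    then have "prefix w v" using w unfolding tpath_def by blast
    then show False using v w prefix_order.trans by blast
  qed
qed

lemma R_distinct: "(p,q,r) \<in> R_constr n m Cl \<Longrightarrow> p \<noteq> q \<and> p \<noteq> r \<and> q \<noteq> r"
  unfolding R_constr_def R_var_def R_negvar_def R_clause_def R_conn_def
  by (auto split: if_splits)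

lemma R_gamma: "(p,q,r) \<in> R_constr n m Cl \<Longrightarrow> Gamma \<in> {p,q,r} \<Longrightarrow> (p,q,r) = (Cc m, Cc (m+1), Gamma)"
  unfolding R_constr_def R_var_def R_negvar_def R_clause_def R_conn_def
  by (auto split: if_splits)

theorem lemma3:
  fixes n m :: nat and Cl :: "nat \<Rightarrow> (nat \<times> bool) set" and P :: "leaf hyperarc set"
  assumes "n \<ge> 1" and "m \<ge> 1"
    and "\<forall>j\<in>{1..m}. card (Cl j) \<in> {2, 3} \<and> (\<forall>(i, s)\<in>Cl j. i \<in> {1..n})"
    and PA: "P \<subseteq> A_constr n m Cl"
    and "\<exists>as. set as = P \<and> is_hpath as {Alpha, Beta} {Cc (m+1), Gamma} \<and> acyclic_hpath as"
  shows "entails (triples P) (Alpha, Beta, Gamma)"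
  unfolding entails_def
proof (intro allI impI)
  fix T :: "leaf tree"
  assume ph: "phylo_tree T" and disp: "\<forall>s\<in>triples P. displays T s"
  obtain as where as: "set as = P" "is_hpath as {Alpha, Beta} {Cc (m+1), Gamma}"
    using assms(5) by blast
  define pos where "pos x = (SOME u. (x,u) \<in> leafpos T)" for x
  have posI: "pos x = u" if "(x,u) \<in> leafpos T" for x u
    using leafpos_unique[OF ph[unfolded phylo_tree_def]] that unfolding pos_def
    by (metis someI)
  define cp where "cp w u = (\<forall>x\<in>u. prefix w (pos x))" for w u
  define le where "le u v = (\<forall>w. cp w v \<longrightarrow> cp w u)" for u v
  have arcinfo: "\<exists>p q r. a = arc (p,q,r) \<and> (p,q,r) \<in> R_constr n m Cl \<and>
      (\<exists>u. (p,u) \<in> leafpos T) \<and> (\<exists>u. (q,u) \<in> leafpos T) \<and> (\<exists>u. (r,u) \<in> leafpos T) \<and>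
      (\<exists>w. prefix w (pos p) \<and> prefix w (pos q) \<and> \<not> prefix w (pos r))"
    if aP: "a \<in> P" for a
  proof -
    obtain t where t: "t \<in> R_constr n m Cl" "a = arc t" using PA aP unfolding A_constr_def by blast
    obtain p q r where tt: "t = (p,q,r)" by (cases t) auto
    have "(p,q,r) \<in> triples P" using R_distinct t tt aP unfolding triples_def by auto
    then have "displays T (p,q,r)" using disp by blast
    then obtain up uq ur where u: "(p,up) \<in> leafpos T" "(q,uq) \<in> leafpos T" "(r,ur) \<in> leafpos T"
        "tpath up uq \<inter> rootpath ur = {}" unfolding displays_def by auto
    then have "pos p = up" "pos q = uq" "pos r = ur" using posI by auto
    then show ?thesis using u displays_iff t tt by blast
  qed
  have step: "le (tail a) h" if aP: "a \<in> P" and hh: "h \<in> heads a" for a h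
  proof -
    obtain p q r w0 where a: "a = arc (p,q,r)" and w0: "prefix w0 (pos p)" "prefix w0 (pos q)" "\<not> prefix w0 (pos r)"
      using arcinfo[OF aP] by blast
    have ta: "tail a = {p,q}" "heads a = {{p,r},{q,r}}" using a unfolding arc_def tail_def heads_def by auto
    have "le {p,q} {p,r}"
      unfolding le_def cp_def
    proof (intro allI impI)
      fix w assume "\<forall>x\<in>{p, r}. prefix w (pos x)"
      then have "prefix w (pos p)" "prefix w (pos r)" by auto
      moreover have "prefix w w0"
        using prefix_same_cases[OF w0(1) \<open>prefix w (pos p)\<close>] w0(3) \<open>prefix w (pos r)\<close>
        prefix_order.trans by blast
      ultimately show "\<forall>x\<in>{p, q}. prefix w (pos x)" using w0 prefix_order.trans by blast
    qed
    moreover have "le {p,q} {q,r}"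
      unfolding le_def cp_def
    proof (intro allI impI)
      fix w assume "\<forall>x\<in>{q, r}. prefix w (pos x)"
      then have "prefix w (pos q)" "prefix w (pos r)" by auto
      moreover have "prefix w w0"
        using prefix_same_cases[OF w0(2) \<open>prefix w (pos q)\<close>] w0(3) \<open>prefix w (pos r)\<close>
        prefix_order.trans by blast
      ultimately show "\<forall>x\<in>{p, q}. prefix w (pos x)" using w0 prefix_order.trans by blast
    qed
    ultimately show ?thesis using ta hh by auto
  qed
  have hp: "as \<noteq> []" "tail (hd as) = {Alpha, Beta}" "{Cc (m+1), Gamma} \<in> heads (last as)"
    "\<And>k. Suc k < length as \<Longrightarrow> tail (as ! Suc k) \<in> heads (as ! k)"
    using as(2) unfolding is_hpath_def by auto
  have inv: "k < length as \<Longrightarrow> le {Alpha, Beta} (tail (as ! k))" for k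
  proof (induction k)
    case 0
    then show ?case using hp(2) hd_conv_nth[OF hp(1)] unfolding le_def by auto
  next
    case (Suc k)
    have "as ! k \<in> P" using as(1) Suc.prems by auto
    then have "le (tail (as ! k)) (tail (as ! Suc k))" using step hp(4) Suc.prems by blast
    then show ?case using Suc unfolding le_def by auto
  qed
  have lastP: "last as \<in> P" using as(1) hp(1) by auto
  have lastI: "le {Alpha, Beta} (tail (last as))"
    using inv[of "length as - 1"] hp(1) last_conv_nth[OF hp(1)] by auto
  obtain p q r w0 where a: "last as = arc (p,q,r)" and pr: "(p,q,r) \<in> R_constr n m Cl"
    and rpos: "\<exists>u. (r,u) \<in> leafpos T"
    and w0: "prefix w0 (pos p)" "prefix w0 (pos q)" "\<not> prefix w0 (pos r)"
    using arcinfo[OF lastP] by blast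
  have "Gamma \<in> {p,q,r}" using hp(3) a unfolding arc_def heads_def by (auto simp: doubleton_eq_iff)
  then have pqr: "p = Cc m" "q = Cc (m+1)" "r = Gamma" using R_gamma[OF pr] by auto
  have "tail (last as) = {p,q}" using a unfolding arc_def tail_def by auto
  then have "cp w0 {Alpha, Beta}" using lastI w0 unfolding le_def cp_def by auto
  then have wab: "prefix w0 (pos Alpha)" "prefix w0 (pos Beta)" unfolding cp_def by auto
  have hdP: "hd as \<in> P" using as(1) hp(1) by auto
  obtain p1 q1 r1 where a1: "hd as = arc (p1,q1,r1)"
    and pq1: "\<exists>u. (p1,u) \<in> leafpos T" "\<exists>u. (q1,u) \<in> leafpos T"
    using arcinfo[OF hdP] by blast
  have "{p1,q1} = {Alpha,Beta}" using hp(2) a1 unfolding arc_def tail_def by auto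
  then have "\<exists>u. (Alpha,u) \<in> leafpos T" "\<exists>u. (Beta,u) \<in> leafpos T"
    using pq1 by (auto simp: doubleton_eq_iff)
  then obtain ua ub ug where u: "(Alpha,ua) \<in> leafpos T" "(Beta,ub) \<in> leafpos T" "(Gamma,ug) \<in> leafpos T"
    using rpos pqr by blast
  then have "pos Alpha = ua" "pos Beta = ub" "pos Gamma = ug" using posI by auto
  then have "tpath ua ub \<inter> rootpath ug = {}" using displays_iff wab w0(3) pqr by auto
  then show "displays T (Alpha, Beta, Gamma)" unfolding displays_def using u by blast
qed

end
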